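(* Let $G=(V,E)$ be an undirected graph and $\tau$ a positive integer. The polytope $$P_1^\tau(G)=\{x\in\mathbb{R}^{E^+\cup E^-}: x_{e^+}\ge1,\ x_{e^-}\ge1,\ x_{e^+}+x_{e^-}=\tau\ \forall e\in E,\ x(\delta^+_{\vec G}(U))\ge\tau\ \forall\,\emptyset\neq U\subsetneq V\}$$ is integral (every vertex is an integral vector).
   Context: Graphs are finite and loopless; parallel edges allowed. $\vec G=(V,E^+\cup E^-)$ is obtained from $G$ by replacing each edge $e=\{u,v\}$ by arcs $e^+=(u,v)$ and $e^-=(v,u)$ (choice arbitrary); $\delta^+_{\vec G}(U)$ is the set of arcs leaving $U$ and $x(B)=\sum_{e\in B}x_e$. *)

theory Defs
  imports "HOL-Analysis.Analysis"
begin

text \<open>A finite loopless multigraph: vertex type 'v (V = UNIV), edge type 'e (E = UNIV),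
  each edge e has two distinct endpoints ep1 e and ep2 e. The bidirected graph has arcs
  (e, True) = e+ = (ep1 e, ep2 e) and (e, False) = e- = (ep2 e, ep1 e).\<close>

definition arc_tail :: "('e \<Rightarrow> 'v) \<Rightarrow> ('e \<Rightarrow> 'v) \<Rightarrow> 'e \<times> bool \<Rightarrow> 'v" where
  "arc_tail ep1 ep2 a = (if snd a then ep1 (fst a) else ep2 (fst a))"

definition arc_head :: "('e \<Rightarrow> 'v) \<Rightarrow> ('e \<Rightarrow> 'v) \<Rightarrow> 'e \<times> bool \<Rightarrow> 'v" where
  "arc_head ep1 ep2 a = (if snd a then ep2 (fst a) else ep1 (fst a))"

definition out_arcs :: "('e \<Rightarrow> 'v) \<Rightarrow> ('e \<Rightarrow> 'v) \<Rightarrow> 'v set \<Rightarrow> ('e \<times> bool) set" where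
  "out_arcs ep1 ep2 U = {a. arc_tail ep1 ep2 a \<in> U \<and> arc_head ep1 ep2 a \<notin> U}"

definition P1tau :: "('e::finite \<Rightarrow> 'v::finite) \<Rightarrow> ('e \<Rightarrow> 'v) \<Rightarrow> nat \<Rightarrow> (real ^ ('e \<times> bool)) set" where
  "P1tau ep1 ep2 \<tau> = {x.
      (\<forall>e. x $ (e, True) \<ge> 1 \<and> x $ (e, False) \<ge> 1 \<and> x $ (e, True) + x $ (e, False) = real \<tau>) \<and>
      (\<forall>U. U \<noteq> {} \<and> U \<noteq> UNIV \<longrightarrow> (\<Sum>a\<in>out_arcs ep1 ep2 U. x $ a) \<ge> real \<tau>)}"

end

theory Submission
  imports Defs
begin


lemma arcsum:
  fixes g :: "'e::finite \<times> bool \<Rightarrow> real"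
  shows "(\<Sum>a\<in>out_arcs ep1 ep2 U. g a) =
    (\<Sum>e\<in>UNIV. of_bool (ep1 e \<in> U \<and> ep2 e \<notin> U) * g (e,True) + of_bool (ep2 e \<in> U \<and> ep1 e \<notin> U) * g (e,False))"
proof -
  have "(\<Sum>a\<in>out_arcs ep1 ep2 U. g a) = (\<Sum>a\<in>UNIV. of_bool (a \<in> out_arcs ep1 ep2 U) * g a)"
    by (rule sum.mono_neutral_cong_left) auto
  also have "\<dots> = (\<Sum>e\<in>UNIV. \<Sum>b\<in>UNIV. of_bool ((e,b) \<in> out_arcs ep1 ep2 U) * g (e,b))"
    unfolding UNIV_Times_UNIV[symmetric] sum.cartesian_product by (simp add: case_prod_beta)
  also have "\<dots> = (\<Sum>e\<in>UNIV. of_bool (ep1 e \<in> U \<and> ep2 e \<notin> U) * g (e,True) + of_bool (ep2 e \<in> U \<and> ep1 e \<notin> U) * g (e,False))"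
    by (rule sum.cong) (auto simp add: UNIV_bool out_arcs_def arc_tail_def arc_head_def)
  finally show ?thesis .
qed

lemma arcsum_UNIV:
  fixes g :: "'e::finite \<times> bool \<Rightarrow> real"
  shows "(\<Sum>a\<in>out_arcs ep1 ep2 U. g a) = (\<Sum>a\<in>UNIV. of_bool (a \<in> out_arcs ep1 ep2 U) * g a)"
  by (rule sum.mono_neutral_cong_left) auto

definition crosses :: "'v set \<Rightarrow> 'v set \<Rightarrow> bool" where
  "crosses A B \<longleftrightarrow> \<not> (A \<inter> B = {} \<or> A \<subseteq> B \<or> B \<subseteq> A)"

definition laminar :: "'v set set \<Rightarrow> bool" where
  "laminar K \<longleftrightarrow> (\<forall>A\<in>K. \<forall>B\<in>K. \<not> crosses A B)"

lemma crosses_sym: "crosses A B \<longleftrightarrow> crosses B A"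
  unfolding crosses_def by blast

lemma cross_lemmas:
  assumes "crosses A B" "\<not> crosses C B"
  shows "crosses C (A\<inter>B) \<Longrightarrow> crosses C A" "crosses C (A\<union>B) \<Longrightarrow> crosses C A"
    "crosses C (A-B) \<Longrightarrow> crosses C A" "crosses C (B-A) \<Longrightarrow> crosses C A"
  using assms unfolding crosses_def by blast+

locale LP =
  fixes ep1 ep2 :: "'e::finite \<Rightarrow> 'v::finite" and \<tau> :: nat and x :: "real^('e\<times>bool)"
  assumes xP: "x \<in> P1tau ep1 ep2 \<tau>"
begin

definition f :: "'v set \<Rightarrow> real" where "f U = (\<Sum>a\<in>out_arcs ep1 ep2 U. x $ a)"
definition tight :: "'v set \<Rightarrow> bool" where "tight U \<longleftrightarrow> U \<noteq> {} \<and> U \<noteq> UNIV \<and> f U = real \<tau>"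
definition y :: "'e \<Rightarrow> real" where "y e = x $ (e,True)"
definition net :: "('e \<Rightarrow> real) \<Rightarrow> 'v set \<Rightarrow> real" where
  "net g U = (\<Sum>e\<in>UNIV. g e * (of_bool (ep1 e \<in> U) - of_bool (ep2 e \<in> U)))"

lemma xF: "x $ (e,False) = real \<tau> - y e"
  using xP unfolding P1tau_def y_def by (auto simp: algebra_simps)

lemma y_ge: "1 \<le> y e" and y_le: "y e \<le> real \<tau> - 1"
  using xP unfolding P1tau_def y_def by (auto simp: algebra_simps) (smt (verit))

lemma f_ge: "U \<noteq> {} \<Longrightarrow> U \<noteq> UNIV \<Longrightarrow> f U \<ge> real \<tau>"
  using xP unfolding P1tau_def f_def by auto

lemma x_nonneg: "x $ a \<ge> 0"
proof (cases a)
  case (Pair e b)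
  then show ?thesis using y_ge[of e] y_le[of e] xF[of e] by (cases b) (auto simp: y_def)
qed

lemma f_net: "f U = net y U + real \<tau> * (\<Sum>e\<in>UNIV. of_bool (ep2 e \<in> U \<and> ep1 e \<notin> U))"
proof -
  have "f U = (\<Sum>e\<in>UNIV. of_bool (ep1 e \<in> U \<and> ep2 e \<notin> U) * y e + of_bool (ep2 e \<in> U \<and> ep1 e \<notin> U) * (real \<tau> - y e))"
    unfolding f_def arcsum xF y_def ..
  also have "\<dots> = (\<Sum>e\<in>UNIV. y e * (of_bool (ep1 e \<in> U) - of_bool (ep2 e \<in> U)) + real \<tau> * of_bool (ep2 e \<in> U \<and> ep1 e \<notin> U))"
    by (rule sum.cong) (auto simp: algebra_simps)
  finally show ?thesis by (simp add: net_def sum.distrib sum_distrib_left)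
qed

lemma net_tight_int: "tight U \<Longrightarrow> net y U \<in> \<int>"
proof -
  assume "tight U"
  hence "net y U = real \<tau> - real \<tau> * (\<Sum>e\<in>UNIV. of_bool (ep2 e \<in> U \<and> ep1 e \<notin> U))"
    using f_net[of U] unfolding tight_def by simp
  moreover have "(\<Sum>e\<in>UNIV. of_bool (ep2 e \<in> U \<and> ep1 e \<notin> U) :: real) \<in> \<int>"
    by (rule Ints_sum) simp
  ultimately show ?thesis by simp
qed

lemma net_compl: "net g (-U) = - net g U"
  unfolding net_def sum_negf[symmetric] by (rule sum.cong) auto

lemma net_union: "net g (A \<union> B) = net g A + net g B - net g (A \<inter> B)"
  unfolding net_def sum.distrib[symmetric] sum_subtractf[symmetric] by (rule sum.cong) (auto simp: algebra_simps)

lemma net_empty: "net g {} = 0"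
  unfolding net_def by simp

lemma f_UNIV: "f U = (\<Sum>a\<in>UNIV. of_bool (a \<in> out_arcs ep1 ep2 U) * x $ a)"
  unfolding f_def by (rule arcsum_UNIV)

lemma submod: "f (A\<inter>B) + f (A\<union>B) \<le> f A + f B"
  unfolding f_UNIV sum.distrib[symmetric]
proof (rule sum_mono)
  fix a
  show "of_bool (a \<in> out_arcs ep1 ep2 (A \<inter> B)) * x $ a + of_bool (a \<in> out_arcs ep1 ep2 (A \<union> B)) * x $ a
        \<le> of_bool (a \<in> out_arcs ep1 ep2 A) * x $ a + of_bool (a \<in> out_arcs ep1 ep2 B) * x $ a"
    using x_nonneg[of a] by (auto simp: out_arcs_def)
qed

lemma uncross:
  assumes "tight U" "tight W" "U \<inter> W \<noteq> {}" "U \<union> W \<noteq> UNIV"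
  shows "tight (U\<inter>W)" "tight (U\<union>W)"
proof -
  have a: "f (U\<inter>W) \<ge> real \<tau>" using f_ge[of "U\<inter>W"] assms unfolding tight_def by auto
  have b: "f (U\<union>W) \<ge> real \<tau>" using f_ge[of "U\<union>W"] assms unfolding tight_def by auto
  have "f (U\<inter>W) + f (U\<union>W) \<le> 2 * real \<tau>" using submod[of U W] assms unfolding tight_def by simp
  then show "tight (U\<inter>W)" "tight (U\<union>W)" using a b assms unfolding tight_def by auto
qed

end


context LP begin

definition r :: 'v where "r = undefined"
definition Lr :: "'v set set" where "Lr = {S. r \<notin> S \<and> (tight S \<or> tight (-S))}"

lemma Lr_int: "S \<in> Lr \<Longrightarrow> net y S \<in> \<int>"
  unfolding Lr_def using net_tight_int net_compl[of y S] minus_in_Ints_iff by fastforce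

lemma L_ex: "\<exists>L. L \<subseteq> Lr \<and> laminar L \<and> (\<forall>K. K \<subseteq> Lr \<and> laminar K \<longrightarrow> card K \<le> card L)"
proof -
  let ?M = "{K. K \<subseteq> Lr \<and> laminar K}"
  have fin: "finite ?M" by simp
  have ne: "{} \<in> ?M" by (simp add: laminar_def)
  have "Max (card ` ?M) \<in> card ` ?M" using fin ne by (intro Max_in) auto
  then obtain L where "L \<in> ?M" "card L = Max (card ` ?M)" by auto
  moreover have "\<forall>K\<in>?M. card K \<le> Max (card ` ?M)" using fin by auto
  ultimately show ?thesis by auto
qed

definition L :: "'v set set" where
  "L = (SOME L. L \<subseteq> Lr \<and> laminar L \<and> (\<forall>K. K \<subseteq> Lr \<and> laminar K \<longrightarrow> card K \<le> card L))"

lemma L_props: "L \<subseteq> Lr" "laminar L" "\<And>K. K \<subseteq> Lr \<Longrightarrow> laminar K \<Longrightarrow> card K \<le> card L"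
  using someI_ex[OF L_ex] unfolding L_def[symmetric] by auto

lemma L_max: assumes "A \<in> Lr" "\<forall>B\<in>L. \<not> crosses B A" shows "A \<in> L"
proof (rule ccontr)
  assume nA: "A \<notin> L"
  have "insert A L \<subseteq> Lr" using assms L_props by auto
  moreover have "laminar (insert A L)"
    using L_props(2) assms(2) unfolding laminar_def by (auto simp: crosses_sym crosses_def)
  ultimately have "card (insert A L) \<le> card L" using L_props(3) by blast
  moreover have "card (insert A L) = Suc (card L)" using nA by simp
  ultimately show False by simp
qed

definition eqv :: "'v \<Rightarrow> 'v \<Rightarrow> bool" where "eqv v w \<longleftrightarrow> (\<forall>A\<in>L. v \<in> A \<longleftrightarrow> w \<in> A)"
definition resp :: "'v set \<Rightarrow> bool" where "resp S \<longleftrightarrow> (\<forall>v w. eqv v w \<longrightarrow> (v \<in> S \<longleftrightarrow> w \<in> S))"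

lemma L_resp: "A \<in> L \<Longrightarrow> resp A"
  unfolding resp_def eqv_def by auto

lemma uncross_Lr:
  assumes A: "A \<in> Lr" and B: "B \<in> Lr" and c: "crosses B A"
  shows "(A\<inter>B \<in> Lr \<and> A\<union>B \<in> Lr) \<or> (A-B \<in> Lr \<and> B-A \<in> Lr)"
proof -
  have rA: "r \<notin> A" and rB: "r \<notin> B" using A B unfolding Lr_def by auto
  have c1: "A \<inter> B \<noteq> {}" "\<not> A \<subseteq> B" "\<not> B \<subseteq> A" using c unfolding crosses_def by auto
  consider "tight A" "tight B" | "tight (-A)" "tight (-B)" | "tight A" "tight (-B)" | "tight (-A)" "tight B"
    using A B unfolding Lr_def by auto
  then show ?thesis
  proof cases
    case 1
    have "A \<union> B \<noteq> UNIV" using rA rB by auto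
    then have "tight (A\<inter>B)" "tight (A\<union>B)" using uncross[OF 1 c1(1)] by auto
    then show ?thesis using rA rB unfolding Lr_def by auto
  next
    case 2
    have i: "(-A) \<inter> (-B) \<noteq> {}" using rA rB by auto
    have u: "(-A) \<union> (-B) \<noteq> UNIV" using c1 by auto
    have "tight (-(A\<union>B))" "tight (-(A\<inter>B))" using uncross[OF 2 i u] by (auto simp: Compl_Un Compl_Int)
    then show ?thesis using rA rB unfolding Lr_def by auto
  next
    case 3
    have i: "A \<inter> (-B) \<noteq> {}" using c1 by auto
    have u: "A \<union> (-B) \<noteq> UNIV" using c1 by auto
    have e1: "A \<inter> (-B) = A - B" and e2: "A \<union> (-B) = -(B - A)" by auto
    have "tight (A-B)" "tight (-(B-A))" using uncross[OF 3 i u] unfolding e1 e2 by auto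
    then show ?thesis using rA rB unfolding Lr_def by auto
  next
    case 4
    have i: "B \<inter> (-A) \<noteq> {}" using c1 by auto
    have u: "B \<union> (-A) \<noteq> UNIV" using c1 by auto
    have e1: "B \<inter> (-A) = B - A" and e2: "B \<union> (-A) = -(A - B)" by auto
    have "tight (B-A)" "tight (-(A-B))" using uncross[OF 4(2) 4(1) i u] unfolding e1 e2 by auto
    then show ?thesis using rA rB unfolding Lr_def by auto
  qed
qed

lemma Lr_resp: "A \<in> Lr \<Longrightarrow> resp A"
proof (induction "card {B\<in>L. crosses B A}" arbitrary: A rule: less_induct)
  case less
  show ?case
  proof (cases "\<exists>B\<in>L. crosses B A")
    case False
    then have "A \<in> L" using L_max less.prems by auto
    then show ?thesis by (rule L_resp)
  next
    case True
    then obtain B where BL: "B \<in> L" and c: "crosses B A" by auto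
    have BLr: "B \<in> Lr" using BL L_props by auto
    have cAB: "crosses A B" using c crosses_sym by auto
    have lt: "card {C\<in>L. crosses C Z} < card {C\<in>L. crosses C A}"
      if Z: "Z = A\<inter>B \<or> Z = A\<union>B \<or> Z = A-B \<or> Z = B-A" for Z
    proof (rule psubset_card_mono)
      show "finite {C\<in>L. crosses C A}" by simp
      have sub: "{C\<in>L. crosses C Z} \<subseteq> {C\<in>L. crosses C A}"
      proof
        fix C assume C: "C \<in> {C\<in>L. crosses C Z}"
        then have "\<not> crosses C B" using BL L_props(2) unfolding laminar_def by auto
        then show "C \<in> {C\<in>L. crosses C A}" using C Z cross_lemmas[OF cAB] by auto
      qed
      have "\<not> crosses B Z" using Z unfolding crosses_def by blast
      then have "B \<notin> {C\<in>L. crosses C Z}" by auto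
      moreover have "B \<in> {C\<in>L. crosses C A}" using BL c by auto
      ultimately show "{C\<in>L. crosses C Z} \<subset> {C\<in>L. crosses C A}" using sub by blast
    qed
    have rB: "resp B" using BL by (rule L_resp)
    from uncross_Lr[OF less.prems BLr c] show ?thesis
    proof
      assume h: "A\<inter>B \<in> Lr \<and> A\<union>B \<in> Lr"
      have "resp (A\<inter>B)" "resp (A\<union>B)" using less.hyps[OF lt] h by auto
      moreover have "A = (A\<inter>B) \<union> ((A\<union>B) - B)" by auto
      ultimately show ?thesis using rB unfolding resp_def by blast
    next
      assume h: "A-B \<in> Lr \<and> B-A \<in> Lr"
      have "resp (A-B)" "resp (B-A)" using less.hyps[OF lt] h by auto
      moreover have "A = (A-B) \<union> (B - (B-A))" by auto
      ultimately show ?thesis using rB unfolding resp_def by blast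
    qed
  qed
qed

lemma tight_resp: "tight U \<Longrightarrow> resp U"
proof -
  assume t: "tight U"
  show "resp U"
  proof (cases "r \<in> U")
    case True
    then have "-U \<in> Lr" using t unfolding Lr_def by auto
    then have "resp (-U)" by (rule Lr_resp)
    then show ?thesis unfolding resp_def by auto
  next
    case False
    then have "U \<in> Lr" using t unfolding Lr_def by auto
    then show ?thesis by (rule Lr_resp)
  qed
qed

end


context LP begin

lemma lam_union_int:
  "finite K \<Longrightarrow> laminar K \<Longrightarrow> (\<forall>A\<in>K. net y A \<in> \<int>) \<Longrightarrow> net y (\<Union>K) \<in> \<int>"
proof (induction "card K" arbitrary: K rule: less_induct)
  case less
  show ?case
  proof (cases "K = {}")
    case True then show ?thesis by (simp add: net_empty)
  next
    case False
    obtain A where A: "A \<in> K" and amin: "\<forall>B\<in>K. B \<subseteq> A \<longrightarrow> A = B"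
      using finite_has_minimal[OF less.prems(1) False] by auto
    let ?K = "K - {A}"
    have lt: "card ?K < card K" using A less.prems(1) by (meson card_Diff1_less)
    have lam: "laminar ?K" using less.prems(2) unfolding laminar_def by auto
    have IH: "net y (\<Union>?K) \<in> \<int>" using less.hyps[OF lt _ lam] less.prems by auto
    have U: "\<Union>K = A \<union> \<Union>?K" using A by auto
    have I: "A \<inter> \<Union>?K = {} \<or> A \<inter> \<Union>?K = A"
    proof (cases "\<exists>B\<in>?K. A \<subseteq> B")
      case True then show ?thesis by auto
    next
      case False
      have "\<forall>B\<in>?K. A \<inter> B = {}"
      proof
        fix B assume B: "B \<in> ?K"
        then have "\<not> crosses A B" using A less.prems(2) unfolding laminar_def by auto
        then show "A \<inter> B = {}" using False B amin unfolding crosses_def by blast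
      qed
      then show ?thesis by auto
    qed
    have nA: "net y A \<in> \<int>" using A less.prems by auto
    from I have "net y (A \<inter> \<Union>?K) \<in> \<int>" using nA by (auto simp: net_empty)
    then show ?thesis unfolding U net_union using nA IH by auto
  qed
qed

lemma L_int: "A \<in> L \<Longrightarrow> net y A \<in> \<int>"
  using L_props(1) Lr_int by auto

lemma class_int: "net y {w. eqv w v} \<in> \<int>"
proof (cases "\<exists>A\<in>L. v \<in> A")
  case True
  let ?Lv = "{A\<in>L. v \<in> A}"
  obtain M where M: "M \<in> ?Lv" and mmin: "\<forall>B\<in>?Lv. B \<subseteq> M \<longrightarrow> M = B"
    using finite_has_minimal[of ?Lv] True by auto
  let ?S = "{A\<in>L. A \<subset> M}"
  have lamL: "laminar L" by (rule L_props)
  have eq: "{w. eqv w v} = M - \<Union>?S"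
  proof (rule set_eqI, rule iffI)
    fix w assume "w \<in> {w. eqv w v}"
    then have e: "\<forall>A\<in>L. w \<in> A \<longleftrightarrow> v \<in> A" unfolding eqv_def by auto
    have "w \<in> M" using e M by auto
    moreover have "w \<notin> \<Union>?S"
    proof
      assume "w \<in> \<Union>?S"
      then obtain A where "A \<in> L" "A \<subset> M" "w \<in> A" by auto
      then show False using e mmin by auto
    qed
    ultimately show "w \<in> M - \<Union>?S" by auto
  next
    fix w assume w: "w \<in> M - \<Union>?S"
    have "\<forall>A\<in>L. w \<in> A \<longleftrightarrow> v \<in> A"
    proof
      fix A assume AL: "A \<in> L"
      have "\<not> crosses A M" using lamL AL M unfolding laminar_def by auto
      then have "A \<inter> M = {} \<or> A \<subseteq> M \<or> M \<subseteq> A" unfolding crosses_def by auto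
      then show "w \<in> A \<longleftrightarrow> v \<in> A"
      proof (elim disjE)
        assume "A \<subseteq> M"
        then show ?thesis using w AL mmin M by (cases "A = M") auto
      qed (use w M in auto)
    qed
    then show "w \<in> {w. eqv w v}" unfolding eqv_def by auto
  qed
  have SM: "\<Union>?S \<subseteq> M" by auto
  have Sint: "net y (\<Union>?S) \<in> \<int>"
    by (rule lam_union_int) (use lamL L_int in \<open>auto simp: laminar_def\<close>)
  have "net y M = net y (M - \<Union>?S) + net y (\<Union>?S)"
    using net_union[of y "M - \<Union>?S" "\<Union>?S"] SM by (simp add: net_empty Un_absorb2 Int_commute)
  then have "net y (M - \<Union>?S) = net y M - net y (\<Union>?S)" by simp
  then show ?thesis unfolding eq using L_int[of M] M Sint by auto
next
  case False
  have eq: "{w. eqv w v} = - \<Union>L" using False unfolding eqv_def by auto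
  have "net y (\<Union>L) \<in> \<int>"
    by (rule lam_union_int) (use L_props(2) L_int in auto)
  then show ?thesis unfolding eq net_compl by auto
qed

end


context LP begin

lemma perturb:
  assumes dnz: "d e0 \<noteq> 0" and dF: "\<And>e. d e \<noteq> 0 \<Longrightarrow> y e \<notin> \<int>"
    and dt: "\<And>U. tight U \<Longrightarrow> net d U = 0"
  shows "\<not> x extreme_point_of (P1tau ep1 ep2 \<tau>)"
proof
  assume ext: "x extreme_point_of (P1tau ep1 ep2 \<tau>)"
  define D :: "real^('e\<times>bool)" where "D = (\<chi> a. if snd a then d (fst a) else - d (fst a))"
  have DT: "D $ (e,True) = d e" and DF: "D $ (e,False) = - d e" for e by (simp_all add: D_def)
  define K where "K = (\<Sum>e\<in>UNIV. \<bar>d e\<bar>) + 1"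
  have dK: "\<bar>d e\<bar> < K" for e
  proof -
    have "\<bar>d e\<bar> \<le> (\<Sum>e\<in>UNIV. \<bar>d e\<bar>)" by (rule member_le_sum) auto
    then show ?thesis unfolding K_def by simp
  qed
  have Kpos: "K > 0" using dK[of e0] by simp
  have netK: "\<bar>net d U\<bar> < K" for U
  proof -
    have "\<bar>net d U\<bar> \<le> (\<Sum>e\<in>UNIV. \<bar>d e * (of_bool (ep1 e \<in> U) - of_bool (ep2 e \<in> U))\<bar>)"
      unfolding net_def by (rule sum_abs)
    also have "\<dots> \<le> (\<Sum>e\<in>UNIV. \<bar>d e\<bar>)"
      by (rule sum_mono) (auto simp: abs_mult)
    finally show ?thesis unfolding K_def by simp
  qed
  define Sl where "Sl = (\<lambda>U. f U - real \<tau>) ` {U. U \<noteq> {} \<and> U \<noteq> UNIV \<and> \<not> tight U}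
      \<union> (\<lambda>e. y e - 1) ` {e. y e \<notin> \<int>} \<union> (\<lambda>e. real \<tau> - 1 - y e) ` {e. y e \<notin> \<int>}"
  define m where "m = Min (insert 1 Sl)"
  have finSl: "finite Sl" unfolding Sl_def by simp
  have Slpos: "\<forall>s\<in>Sl. s > 0"
  proof -
    have h1: "f U - real \<tau> > 0" if "U \<noteq> {}" "U \<noteq> UNIV" "\<not> tight U" for U
      using f_ge[OF that(1,2)] that unfolding tight_def by auto
    have h2: "y e - 1 > 0" if "y e \<notin> \<int>" for e
    proof -
      have "y e \<noteq> 1" using that by auto
      then show ?thesis using y_ge[of e] by auto
    qed
    have h3: "real \<tau> - 1 - y e > 0" if "y e \<notin> \<int>" for e
    proof -
      have "real \<tau> - 1 \<in> \<int>" by simp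
      then have "y e \<noteq> real \<tau> - 1" using that by auto
      then show ?thesis using y_le[of e] by auto
    qed
    show ?thesis unfolding Sl_def using h1 h2 h3 by blast
  qed
  have mpos: "m > 0" unfolding m_def using finSl Slpos by (subst Min_gr_iff) auto
  have mle: "s \<in> Sl \<Longrightarrow> m \<le> s" for s unfolding m_def using finSl by auto
  have inP: "x + t *\<^sub>R D \<in> P1tau ep1 ep2 \<tau>" if t: "\<bar>t\<bar> * K < m" for t
  proof -
    have td: "\<bar>t * d e\<bar> < m" for e
    proof -
      have "\<bar>t * d e\<bar> = \<bar>t\<bar> * \<bar>d e\<bar>" by (simp add: abs_mult)
      also have "\<dots> \<le> \<bar>t\<bar> * K" using dK[of e] by (intro mult_left_mono) auto
      finally show ?thesis using t by simp
    qed
    have box: "x $ (e,True) + t * D $ (e,True) \<ge> 1 \<and> x $ (e,False) + t * D $ (e,False) \<ge> 1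
       \<and> (x $ (e,True) + t * D $ (e,True)) + (x $ (e,False) + t * D $ (e,False)) = real \<tau>" for e
    proof (cases "d e = 0")
      case True then show ?thesis using xP unfolding P1tau_def by (auto simp: DT DF)
    next
      case False
      then have ny: "y e \<notin> \<int>" by (rule dF)
      have "m \<le> y e - 1" "m \<le> real \<tau> - 1 - y e" using mle ny unfolding Sl_def by auto
      then show ?thesis using td[of e] unfolding DT DF xF y_def[symmetric] by (auto simp: abs_if split: if_splits)
    qed
    have cut: "(\<Sum>a\<in>out_arcs ep1 ep2 U. (x + t *\<^sub>R D) $ a) \<ge> real \<tau>" if U: "U \<noteq> {}" "U \<noteq> UNIV" for U
    proof -
      have sD: "(\<Sum>a\<in>out_arcs ep1 ep2 U. D $ a) = net d U"
        unfolding arcsum DT DF net_def by (rule sum.cong) auto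
      have "(\<Sum>a\<in>out_arcs ep1 ep2 U. (x + t *\<^sub>R D) $ a) = f U + t * net d U"
        unfolding f_def sD[symmetric] by (simp add: sum.distrib sum_distrib_left)
      moreover have "f U + t * net d U \<ge> real \<tau>"
      proof (cases "tight U")
        case True then show ?thesis using dt[OF True] unfolding tight_def by simp
      next
        case False
        then have "m \<le> f U - real \<tau>" using mle U unfolding Sl_def by auto
        moreover have "\<bar>t * net d U\<bar> \<le> \<bar>t\<bar> * K"
          using netK[of U] by (simp add: abs_mult mult_left_mono)
        ultimately show ?thesis using t by (auto simp: abs_if split: if_splits)
      qed
      ultimately show ?thesis by simp
    qed
    show ?thesis unfolding P1tau_def using box cut by simp
  qed
  define t where "t = m / (2 * K)"
  have tpos: "t > 0" unfolding t_def using mpos Kpos by simp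
  have tK: "\<bar>t\<bar> * K < m" "\<bar>-t\<bar> * K < m" unfolding t_def using mpos Kpos by auto
  have a: "x + (-t) *\<^sub>R D \<in> P1tau ep1 ep2 \<tau>" and b: "x + t *\<^sub>R D \<in> P1tau ep1 ep2 \<tau>"
    using inP[OF tK(2)] inP[OF tK(1)] by auto
  have ne: "x + (-t) *\<^sub>R D \<noteq> x + t *\<^sub>R D"
  proof
    assume h: "x + (-t) *\<^sub>R D = x + t *\<^sub>R D"
    have "(x + (-t) *\<^sub>R D) $ (e0,True) = (x + t *\<^sub>R D) $ (e0,True)" by (simp only: h)
    then have "x $ (e0,True) - t * d e0 = x $ (e0,True) + t * d e0" by (simp add: DT)
    then show False using tpos dnz by (simp add: DT)
  qed
  have mid: "midpoint (x + (-t) *\<^sub>R D) (x + t *\<^sub>R D) = x"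
    unfolding midpoint_def by (simp add: vec_eq_iff field_simps)
  have "x \<in> open_segment (x + (-t) *\<^sub>R D) (x + t *\<^sub>R D)"
  proof -
    have "midpoint (x + (-t) *\<^sub>R D) (x + t *\<^sub>R D) \<in> open_segment (x + (-t) *\<^sub>R D) (x + t *\<^sub>R D)"
      by (rule iffD2[OF midpoint_in_open_segment ne])
    then show ?thesis by (simp only: mid)
  qed
  then show False using ext a b unfolding extreme_point_of_def by blast
qed

end


context LP begin

definition rep :: "'v \<Rightarrow> 'v" where "rep v = (SOME u. eqv u v)"

lemma rep_eqv: "eqv (rep v) v"
  unfolding rep_def by (rule someI[of _ v]) (simp add: eqv_def)

lemma rep_eq_iff: "rep v = rep w \<longleftrightarrow> eqv v w"
proof
  assume "rep v = rep w"
  then show "eqv v w" using rep_eqv[of v] rep_eqv[of w] unfolding eqv_def by metis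
next
  assume "eqv v w"
  then have "(\<lambda>u. eqv u v) = (\<lambda>u. eqv u w)" unfolding eqv_def by (auto simp: fun_eq_iff)
  then show "rep v = rep w" unfolding rep_def by simp
qed

lemma rep_rep: "rep (rep v) = rep v"
  using rep_eq_iff rep_eqv by blast

lemma resp_rep: "resp U \<Longrightarrow> rep v \<in> U \<longleftrightarrow> v \<in> U"
  using rep_eqv[of v] unfolding resp_def by blast

definition col :: "'e \<Rightarrow> real^'v" where "col e = axis (rep (ep1 e)) 1 - axis (rep (ep2 e)) 1"

lemma net_zero:
  assumes z: "(\<Sum>e\<in>UNIV. d e *\<^sub>R col e) = 0" and U: "resp U"
  shows "net d U = 0"
proof -
  have ax: "(\<Sum>w\<in>U. axis a (1::real) $ w) = of_bool (a \<in> U)" for a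
    by (simp add: axis_def)
  have c: "of_bool (ep1 e \<in> U) - of_bool (ep2 e \<in> U) = (\<Sum>w\<in>U. col e $ w)" for e
    unfolding col_def by (simp add: sum_subtractf ax resp_rep[OF U])
  have "net d U = (\<Sum>e\<in>UNIV. d e * (\<Sum>w\<in>U. col e $ w))"
    unfolding net_def c ..
  also have "\<dots> = (\<Sum>w\<in>U. \<Sum>e\<in>UNIV. d e * col e $ w)"
    unfolding sum_distrib_left by (rule sum.swap)
  also have "\<dots> = (\<Sum>w\<in>U. (\<Sum>e\<in>UNIV. d e *\<^sub>R col e) $ w)"
    by (simp add: sum_component)
  also have "\<dots> = 0" by (simp add: z)
  finally show ?thesis .
qed

lemma exists_d:
  assumes Fne: "\<exists>e. y e \<notin> \<int>"
  shows "\<exists>d e0. d e0 \<noteq> 0 \<and> (\<forall>e. d e \<noteq> 0 \<longrightarrow> y e \<notin> \<int>) \<and> (\<Sum>e\<in>UNIV. d e *\<^sub>R col e) = 0"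
proof -
  define F where "F = {e. y e \<notin> \<int>}"
  define S where "S = rep ` (ep1 ` F \<union> ep2 ` F)"
  define F1 where "F1 s = {e\<in>F. rep (ep1 e) = s}" for s
  define F2 where "F2 s = {e\<in>F. rep (ep2 e) = s}" for s
  show ?thesis
  proof (cases "\<exists>s\<in>S. card (F1 s) + card (F2 s) = 1")
    case True
    then obtain s where sS: "s \<in> S" and s1: "card (F1 s) + card (F2 s) = 1" by auto
    have reps: "rep s = s" using sS rep_rep unfolding S_def by auto
    have cls: "{w. eqv w s} = {w. rep w = s}"
    proof -
      have "eqv w s \<longleftrightarrow> rep w = s" for w using rep_eq_iff[of w s] reps by simp
      then show ?thesis by auto
    qed
    define c where "c e = (of_bool (rep (ep1 e) = s) - of_bool (rep (ep2 e) = s) :: real)" for e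
    have netc: "net y {w. eqv w s} = (\<Sum>e\<in>UNIV. y e * c e)"
      unfolding cls net_def c_def by simp
    have split: "(\<Sum>e\<in>UNIV. y e * c e) = (\<Sum>e\<in>F. y e * c e) + (\<Sum>e\<in>-F. y e * c e)"
      by (subst sum.union_disjoint[symmetric]) auto
    have nonF: "(\<Sum>e\<in>-F. y e * c e) \<in> \<int>"
      by (rule Ints_sum) (auto simp: F_def c_def)
    have onF: "(\<Sum>e\<in>F. y e * c e) = (\<Sum>e\<in>F1 s. y e) - (\<Sum>e\<in>F2 s. y e)"
    proof -
      have "(\<Sum>e\<in>F. y e * c e) = (\<Sum>e\<in>F. (if rep (ep1 e) = s then y e else 0)) - (\<Sum>e\<in>F. (if rep (ep2 e) = s then y e else 0))"
        unfolding sum_subtractf[symmetric] c_def by (rule sum.cong) (auto simp: algebra_simps)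
      then show ?thesis unfolding F1_def F2_def by (simp add: sum.inter_filter)
    qed
    have fin1: "finite (F1 s)" and fin2: "finite (F2 s)" by simp_all
    have "\<exists>e0\<in>F. y e0 \<in> \<int>"
    proof (cases "card (F1 s) = 1")
      case True
      obtain e0 where e0: "F1 s = {e0}" using card_1_singletonE[OF True] by blast
      have "card (F2 s) = 0" using True s1 by linarith
      then have "F2 s = {}" using fin2 by simp
      then have "(\<Sum>e\<in>F. y e * c e) = y e0" using onF e0 by simp
      moreover have "e0 \<in> F" using e0 unfolding F1_def by auto
      moreover have yq: "y e0 = net y {w. eqv w s} - (\<Sum>e\<in>-F. y e * c e)"
        using netc split calculation by simp
      moreover have "y e0 \<in> \<int>" unfolding yq by (rule Ints_diff[OF class_int nonF])
      ultimately show ?thesis by blast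
    next
      case False
      then have c0: "card (F1 s) = 0" "card (F2 s) = 1" using s1 by linarith+
      have c2: "F1 s = {}" using c0(1) fin1 by simp
      obtain e0 where e0: "F2 s = {e0}" using card_1_singletonE[OF c0(2)] by blast
      then have "(\<Sum>e\<in>F. y e * c e) = - y e0" using onF c2 by simp
      moreover have "e0 \<in> F" using e0 unfolding F2_def by auto
      moreover have yq: "y e0 = (\<Sum>e\<in>-F. y e * c e) - net y {w. eqv w s}"
        using netc split calculation by simp
      moreover have "y e0 \<in> \<int>" unfolding yq by (rule Ints_diff[OF nonF class_int])
      ultimately show ?thesis by blast
    qed
    then show ?thesis unfolding F_def by auto
  next
    case False
    have deg2: "2 \<le> card (F1 s) + card (F2 s)" if sS: "s \<in> S" for s
    proof -
      have "F1 s \<noteq> {} \<or> F2 s \<noteq> {}" using sS unfolding S_def F1_def F2_def by auto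
      then have "1 \<le> card (F1 s) + card (F2 s)" by (auto simp: card_gt_0_iff Suc_le_eq)
      then show ?thesis using False sS by fastforce
    qed
    have finS: "finite S" by simp
    have sum1: "(\<Sum>s\<in>S. card (F1 s)) = card F"
    proof -
      have "F = \<Union> (F1 ` S)" unfolding F1_def S_def by auto
      moreover have "card (\<Union> (F1 ` S)) = (\<Sum>s\<in>S. card (F1 s))"
        by (rule card_UN_disjoint) (auto simp: F1_def)
      ultimately show ?thesis by simp
    qed
    have sum2: "(\<Sum>s\<in>S. card (F2 s)) = card F"
    proof -
      have "F = \<Union> (F2 ` S)" unfolding F2_def S_def by auto
      moreover have "card (\<Union> (F2 ` S)) = (\<Sum>s\<in>S. card (F2 s))"
        by (rule card_UN_disjoint) (auto simp: F2_def)
      ultimately show ?thesis by simp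
    qed
    have "(\<Sum>s\<in>S. 2::nat) \<le> (\<Sum>s\<in>S. card (F1 s) + card (F2 s))"
      by (rule sum_mono) (rule deg2)
    then have cSF: "card S \<le> card F" using sum1 sum2 by (simp add: sum.distrib)
    show ?thesis
    proof (cases "inj_on col F")
      case False
      then obtain e e' where ee: "e \<in> F" "e' \<in> F" "e \<noteq> e'" "col e = col e'"
        unfolding inj_on_def by auto
      define d where "d z = (if z = e then 1 else if z = e' then -1 else (0::real))" for z
      have dz: "d z *\<^sub>R col z = (if z = e then col e else 0) - (if z = e' then col e else 0)" for z
      proof (cases "z = e")
        case True then show ?thesis using ee(3) by (simp add: d_def)
      next
        case False then show ?thesis using ee(4) by (cases "z = e'") (simp_all add: d_def)
      qed
      have z: "(\<Sum>z\<in>UNIV. d z *\<^sub>R col z) = 0"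
        unfolding dz sum_subtractf by simp
      have d0: "d e \<noteq> 0" by (simp add: d_def)
      have dF: "\<forall>z. d z \<noteq> 0 \<longrightarrow> y z \<notin> \<int>" using ee(1,2) unfolding d_def F_def by auto
      show ?thesis by (rule exI[of _ d], rule exI[of _ e]) (use z d0 dF in simp)
    next
      case True
      obtain e1 where e1: "e1 \<in> F" using Fne unfolding F_def by auto
      define s0 where "s0 = rep (ep1 e1)"
      have s0S: "s0 \<in> S" unfolding s0_def S_def using e1 by auto
      define v where "v s = axis s (1::real) - axis s0 1" for s
      define B where "B = v ` (S - {s0})"
      have cB: "card B < card S"
      proof -
        have "card B \<le> card (S - {s0})" unfolding B_def by (rule card_image_le) simp
        also have "\<dots> < card S" using s0S finS by (meson card_Diff1_less)
        finally show ?thesis .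
      qed
      have vspan: "v s \<in> span B" if "s \<in> S" for s
      proof (cases "s = s0")
        case True then show ?thesis by (simp add: v_def span_zero)
      next
        case False then show ?thesis using that unfolding B_def by (intro span_base) auto
      qed
      have colspan: "col ` F \<subseteq> span B"
      proof
        fix z assume "z \<in> col ` F"
        then obtain e where e: "e \<in> F" "z = col e" by auto
        have "col e = v (rep (ep1 e)) - v (rep (ep2 e))" unfolding col_def v_def by simp
        moreover have "rep (ep1 e) \<in> S" "rep (ep2 e) \<in> S" using e unfolding S_def by auto
        ultimately show "z \<in> span B" using e vspan by (simp add: span_diff)
      qed
      have dimB: "dim (col ` F) \<le> card B"
        by (rule dim_le_card[OF colspan]) (simp add: B_def)
      have ccol: "card (col ` F) = card F" using True by (simp add: card_image)
      have dep: "dependent (col ` F)"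
      proof (rule ccontr)
        assume "\<not> dependent (col ` F)"
        then have "card (col ` F) \<le> dim (col ` F)" by (intro independent_card_le_dim) auto
        then show False using dimB cB cSF ccol by linarith
      qed
      then obtain u where u: "\<exists>w\<in>col ` F. u w \<noteq> 0" "(\<Sum>w\<in>col ` F. u w *\<^sub>R w) = 0"
        using dependent_finite[of "col ` F"] by auto
      define d where "d e = (if e \<in> F then u (col e) else 0)" for e
      have "(\<Sum>e\<in>UNIV. d e *\<^sub>R col e) = (\<Sum>e\<in>UNIV. if e \<in> F then u (col e) *\<^sub>R col e else 0)"
        by (rule sum.cong) (auto simp: d_def)
      also have "\<dots> = (\<Sum>e\<in>F. u (col e) *\<^sub>R col e)"
        by (simp add: sum.inter_restrict[symmetric])
      also have "\<dots> = (\<Sum>w\<in>col ` F. u w *\<^sub>R w)"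
        by (simp add: sum.reindex[OF True])
      also have "\<dots> = 0" by (rule u(2))
      finally have z: "(\<Sum>e\<in>UNIV. d e *\<^sub>R col e) = 0" .
      from u(1) obtain e0 where "e0 \<in> F" "u (col e0) \<noteq> 0" by auto
      then have "d e0 \<noteq> 0" by (simp add: d_def)
      moreover have "\<forall>e. d e \<noteq> 0 \<longrightarrow> y e \<notin> \<int>" unfolding d_def F_def by auto
      ultimately show ?thesis using z by blast
    qed
  qed
qed

end

theorem mainTheorem15:
  fixes ep1 ep2 :: "'e::finite \<Rightarrow> 'v::finite" and \<tau> :: nat
  assumes loopless: "\<And>e. ep1 e \<noteq> ep2 e"
    and tau_pos: "\<tau> > 0"
  shows "\<forall>x. x extreme_point_of (P1tau ep1 ep2 \<tau>) \<longrightarrow> (\<forall>a. x $ a \<in> \<int>)"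
proof (rule allI, rule impI)
  fix x assume ext: "x extreme_point_of (P1tau ep1 ep2 \<tau>)"
  then have xP: "x \<in> P1tau ep1 ep2 \<tau>" by (simp add: extreme_point_of_def)
  interpret LP ep1 ep2 \<tau> x by unfold_locales (rule xP)
  have yint: "\<forall>e. y e \<in> \<int>"
  proof (rule ccontr)
    assume "\<not> (\<forall>e. y e \<in> \<int>)"
    then obtain d e0 where d: "d e0 \<noteq> 0" "\<forall>e. d e \<noteq> 0 \<longrightarrow> y e \<notin> \<int>" "(\<Sum>e\<in>UNIV. d e *\<^sub>R col e) = 0"
      using exists_d by blast
    have "\<And>U. tight U \<Longrightarrow> net d U = 0" using net_zero[OF d(3)] tight_resp by auto
    then have "\<not> x extreme_point_of (P1tau ep1 ep2 \<tau>)" using perturb[of d e0] d by auto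
    with ext show False by simp
  qed
  show "\<forall>a. x $ a \<in> \<int>"
  proof
    fix a :: "'e \<times> bool"
    obtain e b where ab: "a = (e,b)" by (cases a)
    show "x $ a \<in> \<int>"
    proof (cases b)
      case True then show ?thesis using yint ab by (simp add: y_def[symmetric])
    next
      case False then show ?thesis using yint ab xF by simp
    qed
  qed
qed


end
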